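(* Let $M=\{x\in\mathbb{R}^k:x_i\ge0,\ \sum_ix_i=1\}$, $M_0=\{x\in M:\prod_ix_i=0\}$, and $M_1=M\setminus M_0$. Let $F:M\to M$ have the form $F_i(x)=x_if_i(x)$ with each $f_i:M\to(0,\infty)$ continuous. Let $p^\varepsilon$, $\varepsilon=1/N$, be the transition kernel of the multinomial process associated with $F$. Set $\rho(x,y)=\sum_{i=1}^ky_i\log\frac{y_i}{F_i(x)}$, with the conventions $0\log0=0$ and $y\log(y/0)=+\infty$ for $y>0$. Then $\rho$ and $p^\varepsilon$ satisfy Hypotheses (LD) and (LD0).
   Context: For $x\in M$ and $N\in\mathbb{N}$, let $Z_1(x),Z_2(x),\dots$ be independent multinomial random vectors with $N$ trials, $k$ outcomes, and probability $x_i$ of outcome $i$. With $\varepsilon=1/N$, the multinomial process associated with $F$ is the Markov chain on $M\cap\varepsilon\mathbb{Z}^k$ given by $X^\varepsilon_{t+1}=\varepsilon Z_{t+1}(F(X^\varepsilon_t))$. Its kernel is $p^\varepsilon(x,\Gamma)=\mathbb{P}[\varepsilon Z_1(F(x))\in\Gamma]$. Let $d(x,y)=\max_i|x_i-y_i|$. Hypothesis (LD). There is $\rho:M\times M\to[0,+\infty]$ such that: (i) $\rho$ is continuous on $M_1\times M$; (ii) $\rho(x,y)=0$ iff $y=F(x)$; (iii) for every $\beta>0$, $\inf\{\rho(x,y):x,y\in M,\ d(F(x),y)>\beta\}>0$; (iv) lower bound: for every compact $K\subset M_1$, every open ball $U$ of $M$ and every $\eta>0$, there is $\varepsilon_0>0$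 such that $\varepsilon\log p^\varepsilon(x,U)\ge-\inf_{y\in U}\rho(x,y)-\eta$ for all $x\in K$ and $\varepsilon<\varepsilon_0$; (v) upper bound: for every closed $C\subset M$ and every $\eta>0$, there is $\varepsilon_0>0$ such that $\varepsilon\log p^\varepsilon(x,C)\le-\inf_{y\in C}\rho(x,y)+\eta$ for all $x\in M$ and $\varepsilon<\varepsilon_0$. Hypothesis (LD0). For every $c>0$ there is an open neighborhood $V_0$ of $M_0$ with $\liminf_{\varepsilon\to0}\inf_{x\in V_0}\varepsilon\log p^\varepsilon(x,M_0)\ge-c$. *)

theory Defs
  imports "HOL-Analysis.Analysis"
begin

text \<open>The simplex M, its boundary M0 and its interior M1, for vectors in R^k
  (the index type 'k is an arbitrary finite type, k = CARD('k)).\<close>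

definition simplexM :: "(real^'k::finite) set" where
  "simplexM = {x. (\<forall>i. 0 \<le> x$i) \<and> (\<Sum>i\<in>UNIV. x$i) = 1}"

definition simplexM0 :: "(real^'k::finite) set" where
  "simplexM0 = {x \<in> simplexM. (\<Prod>i\<in>UNIV. x$i) = 0}"

definition simplexM1 :: "(real^'k::finite) set" where
  "simplexM1 = simplexM - simplexM0"

definition dmax :: "real^'k::finite \<Rightarrow> real^'k \<Rightarrow> real" where
  "dmax x y = Max (range (\<lambda>i. \<bar>x$i - y$i\<bar>))"

definition is_open_ballM :: "(real^'k::finite) set \<Rightarrow> bool" where
  "is_open_ballM U \<longleftrightarrow> (\<exists>c r. c \<in> simplexM \<and> 0 < r \<and> U = {y \<in> simplexM. dmax c y < r})"

text \<open>Transition kernel of the multinomial process associated with F, with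
  N trials and epsilon = 1/N:
  p(x,Gamma) = P[ (1/N) Z(F x) \<in> Gamma ], Z(F x) multinomial(N; F x).\<close>

definition mn_kernel ::
  "(real^'k::finite \<Rightarrow> real^'k) \<Rightarrow> nat \<Rightarrow> real^'k \<Rightarrow> (real^'k) set \<Rightarrow> real" where
  "mn_kernel F N x \<Gamma> =
     (\<Sum>n\<in>{n::'k \<Rightarrow> nat. sum n UNIV = N \<and> (\<chi> i. real (n i) / real N) \<in> \<Gamma>}.
        fact N / (\<Prod>i\<in>UNIV. fact (n i)) * (\<Prod>i\<in>UNIV. (F x $ i) ^ n i))"

definition elog :: "real \<Rightarrow> ereal" where
  "elog p = (if p \<le> 0 then -\<infinity> else ereal (ln p))"

definition rel_ent_term :: "real \<Rightarrow> real \<Rightarrow> ereal" where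
  "rel_ent_term y z = (if y = 0 then 0 else if z = 0 then \<infinity> else ereal (y * ln (y / z)))"

definition rhoF :: "(real^'k::finite \<Rightarrow> real^'k) \<Rightarrow> real^'k \<Rightarrow> real^'k \<Rightarrow> ereal" where
  "rhoF F x y = (\<Sum>i\<in>UNIV. rel_ent_term (y$i) (F x $ i))"

text \<open>Hypothesis (LD) for a rate function rho and kernel p (p N = p^epsilon, epsilon = 1/N).\<close>

definition hyp_LD ::
  "(real^'k::finite \<Rightarrow> real^'k) \<Rightarrow> (real^'k \<Rightarrow> real^'k \<Rightarrow> ereal)
     \<Rightarrow> (nat \<Rightarrow> real^'k \<Rightarrow> (real^'k) set \<Rightarrow> real) \<Rightarrow> bool" where
  "hyp_LD F \<rho> p \<longleftrightarrow>
     (\<forall>x\<in>simplexM. \<forall>y\<in>simplexM. \<rho> x y \<ge> 0)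
   \<and> continuous_on (simplexM1 \<times> simplexM) (\<lambda>(x,y). \<rho> x y)
   \<and> (\<forall>x\<in>simplexM. \<forall>y\<in>simplexM. \<rho> x y = 0 \<longleftrightarrow> y = F x)
   \<and> (\<forall>\<beta>>0. Inf {\<rho> x y | x y. x \<in> simplexM \<and> y \<in> simplexM \<and> dmax (F x) y > \<beta>} > 0)
   \<and> (\<forall>K U \<eta>. compact K \<and> K \<subseteq> simplexM1 \<and> is_open_ballM U \<and> \<eta> > 0 \<longrightarrow>
        (\<exists>\<epsilon>0>0. \<forall>N. N > 0 \<and> 1 / real N < \<epsilon>0 \<longrightarrow>
           (\<forall>x\<in>K. ereal (1 / real N) * elog (p N x U)
                     \<ge> - (INF y\<in>U. \<rho> x y) - ereal \<eta>)))
   \<and> (\<forall>C \<eta>. closed C \<and> C \<subseteq> simplexM \<and> \<eta> > 0 \<longrightarrow>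
        (\<exists>\<epsilon>0>0. \<forall>N. N > 0 \<and> 1 / real N < \<epsilon>0 \<longrightarrow>
           (\<forall>x\<in>simplexM. ereal (1 / real N) * elog (p N x C)
                     \<le> - (INF y\<in>C. \<rho> x y) + ereal \<eta>)))"

definition hyp_LD0 :: "(nat \<Rightarrow> real^'k::finite \<Rightarrow> (real^'k) set \<Rightarrow> real) \<Rightarrow> bool" where
  "hyp_LD0 p \<longleftrightarrow>
     (\<forall>c>0. \<exists>V0. open V0 \<and> simplexM0 \<subseteq> V0 \<and>
        liminf (\<lambda>N. INF x\<in>V0 \<inter> simplexM. ereal (1 / real N) * elog (p N x simplexM0))
          \<ge> - ereal c)"

end

theory Submission
  imports Defs "HOL-Real_Asymp.Real_Asymp"
begin


lemma S3: "(real n + 1) ^ n \<le> exp 1 * real n ^ n"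
proof (cases "n = 0")
  case True then show ?thesis by simp
next
  case False
  hence n: "real n > 0" by simp
  have "(real n + 1) ^ n = real n ^ n * (1 + 1/real n) ^ n"
    using n by (simp add: power_mult_distrib[symmetric] field_simps)
  also have "(1 + 1/real n) ^ n = exp (real n * ln (1 + 1/real n))"
    using n by (simp add: exp_of_nat_mult add_pos_pos)
  also have "\<dots> \<le> exp 1"
  proof -
    have "ln (1 + 1/real n) \<le> 1/real n" by (rule ln_add_one_self_le_self) simp
    hence "real n * ln (1 + 1/real n) \<le> 1" using n by (simp add: field_simps)
    thus ?thesis by simp
  qed
  finally show ?thesis using n by (simp add: mult_left_mono mult.commute)
qed

lemma S4: assumes "m \<ge> 1" shows "exp 1 * real m ^ (m+1) \<le> (real m + 1) ^ (m+1)"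
proof -
  have m: "real m > 0" using assms by simp
  have "ln (real m / (real m + 1)) \<le> real m / (real m + 1) - 1"
    using m by (intro ln_le_minus_one) simp
  hence "ln (real m / (real m + 1)) \<le> - 1 / (real m + 1)" using m by (simp add: field_simps)
  moreover have "ln (real m / (real m + 1)) = - ln (1 + 1/real m)"
    using m by (simp add: ln_div field_simps)
  ultimately have "1 \<le> (real m + 1) * ln (1 + 1/real m)" using m by (simp add: field_simps)
  hence "exp 1 \<le> exp (real (m+1) * ln (1 + 1/real m))" by (simp add: algebra_simps)
  also have "\<dots> = (1 + 1/real m) ^ (m+1)"
    using m by (simp add: exp_of_nat_mult add_pos_pos del: of_nat_Suc)
  finally have "exp 1 \<le> (1 + 1/real m) ^ (m+1)" .
  hence "exp 1 * real m ^ (m+1) \<le> (1 + 1/real m) ^ (m+1) * real m ^ (m+1)"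
    using m by (intro mult_right_mono) auto
  also have "\<dots> = (real m + 1) ^ (m+1)"
    using m by (simp add: power_mult_distrib[symmetric] field_simps)
  finally show ?thesis .
qed

lemma S1: "real n ^ n \<le> fact n * exp (real n)"
proof (induction n)
  case 0 then show ?case by simp
next
  case (Suc n)
  have "real (Suc n) ^ Suc n = (real n + 1) * (real n + 1) ^ n" by (simp add: add.commute)
  also have "\<dots> \<le> (real n + 1) * (exp 1 * real n ^ n)"
    using S3[of n] by (intro mult_left_mono) auto
  also have "\<dots> \<le> (real n + 1) * (exp 1 * (fact n * exp (real n)))"
    using Suc by (intro mult_left_mono) auto
  also have "\<dots> = fact (Suc n) * exp (real (Suc n))"
    by (simp add: exp_add algebra_simps)
  finally show ?case by (simp add: add_ac)
qed

lemma S2: "fact n * exp (real n) \<le> exp 1 * (real n + 1) ^ (n+1)"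
proof (induction n)
  case 0 then show ?case by simp
next
  case (Suc n)
  have "fact (Suc n) * exp (real (Suc n)) = (real n + 1) * exp 1 * (fact n * exp (real n))"
    by (simp add: exp_add algebra_simps)
  also have "\<dots> \<le> (real n + 1) * exp 1 * (exp 1 * (real n + 1) ^ (n+1))"
    using Suc by (intro mult_left_mono) auto
  also have "\<dots> = exp 1 * (exp 1 * real (Suc n) ^ (Suc n + 1))" by (simp add: add_ac)
  also have "\<dots> \<le> exp 1 * (real (Suc n) + 1) ^ (Suc n + 1)"
    using S4[of "Suc n"] by (intro mult_left_mono) auto
  finally show ?case by simp
qed



definition mterm :: "real^'k::finite \<Rightarrow> nat \<Rightarrow> ('k \<Rightarrow> nat) \<Rightarrow> real" where
  "mterm p N n = fact N / (\<Prod>i\<in>UNIV. fact (n i)) * (\<Prod>i\<in>UNIV. (p $ i) ^ n i)"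

definition Eterm :: "real^'k::finite \<Rightarrow> nat \<Rightarrow> ('k \<Rightarrow> nat) \<Rightarrow> real" where
  "Eterm p N n = real N ^ N * (\<Prod>i\<in>UNIV. (p $ i) ^ n i) / (\<Prod>i\<in>UNIV. real (n i) ^ n i)"

lemma fact_exp_bound: "fact N * exp (real N) \<le> exp 2 * (real N + 1) * real N ^ N"
proof -
  have "fact N * exp (real N) \<le> exp 1 * (real N + 1) ^ (N+1)" by (rule S2)
  also have "\<dots> = exp 1 * (real N + 1) * (real N + 1) ^ N" by simp
  also have "\<dots> \<le> exp 1 * (real N + 1) * (exp 1 * real N ^ N)"
    by (intro mult_left_mono S3) auto
  also have "\<dots> = exp 2 * (real N + 1) * real N ^ N"
    by (simp add: exp_add[symmetric] mult_ac)
  finally show ?thesis .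
qed

lemma prod_pos_B: "(\<Prod>i\<in>UNIV. real (n i) ^ n i) > 0"
proof -
  have "\<And>i. real (n i) ^ n i > 0"
    by (case_tac "n i = 0") auto
  thus ?thesis by (intro prod_pos) auto
qed

lemma mterm_upper:
  fixes p :: "real^'k::finite"
  assumes p: "\<And>i. p $ i \<ge> 0" and sN: "sum n UNIV = N"
  shows "mterm p N n \<le> exp 2 * (real N + 1) * Eterm p N n"
proof -
  define A where "A = (\<Prod>i\<in>UNIV. fact (n i) :: real)"
  define B where "B = (\<Prod>i\<in>UNIV. real (n i) ^ n i)"
  define P where "P = (\<Prod>i\<in>UNIV. (p $ i) ^ n i)"
  have A: "A > 0" unfolding A_def by (intro prod_pos) auto
  have B: "B > 0" unfolding B_def by (rule prod_pos_B)
  have P: "P \<ge> 0" unfolding P_def using p by (intro prod_nonneg) auto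
  have "B \<le> (\<Prod>i\<in>UNIV. fact (n i) * exp (real (n i)))"
    unfolding B_def by (intro prod_mono) (auto simp: S1)
  also have "\<dots> = A * exp (real N)"
    unfolding A_def prod.distrib using sN
    by (simp add: exp_sum[symmetric] of_nat_sum[symmetric])
  finally have BA: "B \<le> A * exp (real N)" .
  have "fact N * B \<le> fact N * (A * exp (real N))"
    using BA by (intro mult_left_mono) auto
  also have "\<dots> = A * (fact N * exp (real N))" by (simp add: mult_ac)
  also have "\<dots> \<le> A * (exp 2 * (real N + 1) * real N ^ N)"
    using A by (intro mult_left_mono fact_exp_bound) auto
  finally have key: "fact N * B \<le> A * (exp 2 * (real N + 1) * real N ^ N)" .
  have "fact N / A \<le> exp 2 * (real N + 1) * real N ^ N / B"
    using key A B by (simp add: field_simps)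
  hence "fact N / A * P \<le> exp 2 * (real N + 1) * real N ^ N / B * P"
    using P by (intro mult_right_mono) auto
  thus ?thesis unfolding mterm_def Eterm_def A_def[symmetric] B_def[symmetric] P_def[symmetric]
    by (simp add: field_simps)
qed

lemma mterm_lower:
  fixes p :: "real^'k::finite"
  assumes p: "\<And>i. p $ i \<ge> 0" and sN: "sum n UNIV = N"
  shows "Eterm p N n / (exp 2 * (real N + 1)) ^ CARD('k) \<le> mterm p N n"
proof -
  define A where "A = (\<Prod>i\<in>UNIV. fact (n i) :: real)"
  define B where "B = (\<Prod>i\<in>UNIV. real (n i) ^ n i)"
  define P where "P = (\<Prod>i\<in>UNIV. (p $ i) ^ n i)"
  define C where "C = (exp 2 * (real N + 1)) ^ CARD('k)"
  have A: "A > 0" unfolding A_def by (intro prod_pos) auto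
  have B: "B > 0" unfolding B_def by (rule prod_pos_B)
  have P: "P \<ge> 0" unfolding P_def using p by (intro prod_nonneg) auto
  have C: "C > 0" unfolding C_def by simp
  have "A * exp (real N) = (\<Prod>i\<in>UNIV. fact (n i) * exp (real (n i)))"
    unfolding A_def prod.distrib using sN
    by (simp add: exp_sum[symmetric] of_nat_sum[symmetric])
  also have "\<dots> \<le> (\<Prod>i\<in>UNIV. exp 2 * (real (n i) + 1) * real (n i) ^ n i)"
    by (intro prod_mono) (auto simp: fact_exp_bound)
  also have "\<dots> = (\<Prod>i\<in>UNIV. exp 2 * (real (n i) + 1)) * B"
    unfolding B_def prod.distrib by simp
  also have "\<dots> \<le> C * B"
  proof -
    have "(\<Prod>i\<in>UNIV. exp 2 * (real (n i) + 1)) \<le> (\<Prod>i\<in>(UNIV::'k set). exp 2 * (real N + 1))"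
    proof (intro prod_mono conjI)
      fix i :: 'k
      have "n i \<le> N" using sN member_le_sum[of i UNIV n] by auto
      thus "exp 2 * (real (n i) + 1) \<le> exp 2 * (real N + 1)" by simp
    qed auto
    thus ?thesis unfolding C_def using B by (intro mult_right_mono) auto
  qed
  finally have AC: "A * exp (real N) \<le> C * B" .
  have "real N ^ N * A \<le> fact N * exp (real N) * A"
    using A by (intro mult_right_mono S1) auto
  also have "\<dots> = fact N * (A * exp (real N))" by (simp add: mult_ac)
  also have "\<dots> \<le> fact N * (C * B)" using AC by (intro mult_left_mono) auto
  finally have key: "real N ^ N * A \<le> fact N * (C * B)" .
  have "real N ^ N / B / C \<le> fact N / A"
    using key A B C by (simp add: field_simps)
  hence "real N ^ N / B / C * P \<le> fact N / A * P"
    using P by (intro mult_right_mono) auto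
  thus ?thesis unfolding mterm_def Eterm_def A_def[symmetric] B_def[symmetric] P_def[symmetric]
    C_def[symmetric] by (simp add: field_simps)
qed



definition rr :: "real \<Rightarrow> real \<Rightarrow> real" where
  "rr y z = (if y = 0 then 0 else y * ln (y / z))"

definition rhoP :: "real^'k::finite \<Rightarrow> real^'k \<Rightarrow> ereal" where
  "rhoP p y = (\<Sum>i\<in>UNIV. rel_ent_term (y$i) (p$i))"

definition typv :: "nat \<Rightarrow> ('k::finite \<Rightarrow> nat) \<Rightarrow> real^'k" where
  "typv N n = (\<chi> i. real (n i) / real N)"

lemma rhoF_eq: "rhoF F x y = rhoP (F x) y"
  unfolding rhoF_def rhoP_def by simp

lemma rhoP_real:
  assumes "\<And>i. y$i \<noteq> 0 \<Longrightarrow> p$i \<noteq> 0"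
  shows "rhoP p y = ereal (\<Sum>i\<in>UNIV. rr (y$i) (p$i))"
proof -
  have "\<And>i. rel_ent_term (y$i) (p$i) = ereal (rr (y$i) (p$i))"
    using assms unfolding rel_ent_term_def rr_def by auto
  thus ?thesis unfolding rhoP_def by simp
qed

lemma rhoP_inf:
  assumes "y$i \<noteq> 0" "p$i = 0"
  shows "rhoP p y = \<infinity>"
  unfolding rhoP_def sum_Pinfty using assms by (auto simp: rel_ent_term_def)

lemma mterm_zero:
  assumes "n i > 0" "p$i = 0"
  shows "mterm p N n = 0"
proof -
  have "(\<Prod>i\<in>UNIV. (p $ i) ^ n i) = 0"
    using assms by (intro prod_zero) (auto intro!: bexI[of _ i])
  thus ?thesis unfolding mterm_def by simp
qed

lemma Eterm_exp:
  assumes N: "N > 0" and sN: "sum n UNIV = N" and p: "\<And>i. p$i \<ge> 0"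
    and pos: "\<And>i. n i > 0 \<Longrightarrow> p$i > 0"
  shows "Eterm p N n = exp (- real N * (\<Sum>i\<in>UNIV. rr (real (n i) / real N) (p$i)))"
proof -
  have each: "exp (- real N * rr (real (n i) / real N) (p$i)) = (real N * p$i / real (n i)) ^ n i" for i
  proof (cases "n i = 0")
    case True then show ?thesis by (simp add: rr_def)
  next
    case False
    hence ni: "real (n i) > 0" and pi: "p$i > 0" using pos by auto
    have "- real N * rr (real (n i) / real N) (p$i) = real (n i) * ln (real N * p$i / real (n i))"
      using ni pi N by (simp add: rr_def ln_div ln_mult field_simps)
    hence "exp (- real N * rr (real (n i) / real N) (p$i)) = exp (ln (real N * p$i / real (n i))) ^ n i"
      by (simp add: exp_of_nat_mult)
    also have "\<dots> = (real N * p$i / real (n i)) ^ n i" using ni pi N by simp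
    finally show ?thesis .
  qed
  have "exp (- real N * (\<Sum>i\<in>UNIV. rr (real (n i) / real N) (p$i)))
        = (\<Prod>i\<in>UNIV. exp (- real N * rr (real (n i) / real N) (p$i)))"
    by (simp add: sum_distrib_left exp_sum)
  also have "\<dots> = (\<Prod>i\<in>UNIV. (real N * p$i / real (n i)) ^ n i)" using each by simp
  also have "\<dots> = (\<Prod>i\<in>UNIV. real N ^ n i) * (\<Prod>i\<in>UNIV. (p$i) ^ n i) / (\<Prod>i\<in>UNIV. real (n i) ^ n i)"
    by (simp add: power_divide power_mult_distrib prod.distrib prod_dividef)
  also have "(\<Prod>i\<in>UNIV. real N ^ n i) = real N ^ N" using sN power_sum[of "real N" n UNIV] by simp
  finally show ?thesis unfolding Eterm_def by simp
qed



lemma rr_quad: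
  fixes y z :: real
  assumes y: "0 < y" "y \<le> 1" and z: "0 < z" "z \<le> 1"
  shows "y - z + (y - z)^2 / 2 \<le> y * ln (y / z)"
proof -
  define g :: "real \<Rightarrow> real" where "g t = t * ln (t / z) - t + z - (t - z)^2 / 2" for t
  have der: "DERIV g t :> ln (t / z) - (t - z)" if "t > 0" for t
    unfolding g_def using that z
    by (auto intro!: derivative_eq_intros simp: field_simps power2_eq_square)
  have gz: "g z = 0" unfolding g_def by simp
  have "g y \<ge> 0"
  proof (cases "z \<le> y")
    case True
    have "g z \<le> g y"
    proof (rule DERIV_nonneg_imp_nondecreasing[OF True])
      fix t assume t: "z \<le> t" "t \<le> y"
      have "ln (z / t) \<le> z / t - 1" using t z by (intro ln_le_minus_one) auto
      moreover have "ln (z / t) = - ln (t / z)" using t z by (simp add: ln_div)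
      ultimately have "ln (t / z) \<ge> (t - z) / t" using t z by (simp add: field_simps)
      moreover have "(t - z) / t \<ge> t - z"
      proof -
        have "(t - z) * 1 \<ge> (t - z) * t" using t y z by (intro mult_left_mono) auto
        thus ?thesis using t z by (simp add: field_simps)
      qed
      ultimately show "\<exists>d. DERIV g t :> d \<and> d \<ge> 0"
        using der[of t] t z by (intro exI[of _ "ln (t / z) - (t - z)"]) auto
    qed
    thus ?thesis using gz by simp
  next
    case False
    have "g z \<le> g y"
    proof (rule DERIV_nonpos_imp_nonincreasing[of y z])
      show "y \<le> z" using False by simp
      fix t assume t: "y \<le> t" "t \<le> z"
      have "ln (t / z) \<le> t / z - 1" using t y z by (intro ln_le_minus_one) auto
      moreover have "(t - z) / z \<le> t - z"
      proof -
        have "(t - z) * 1 \<le> (t - z) * z" using t y z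
          by (intro mult_left_mono_neg) auto
        thus ?thesis using t z by (simp add: field_simps)
      qed
      moreover have "t / z - 1 = (t - z) / z" using z by (simp add: field_simps)
      ultimately show "\<exists>d. DERIV g t :> d \<and> d \<le> 0"
        using der[of t] t y z by (intro exI[of _ "ln (t / z) - (t - z)"]) auto
    qed
    thus ?thesis using gz by simp
  qed
  thus ?thesis unfolding g_def by simp
qed

lemma rel_ent_quad:
  fixes y z :: real
  assumes y: "0 \<le> y" "y \<le> 1" and z: "0 \<le> z" "z \<le> 1"
  shows "ereal (y - z + (y - z)^2 / 2) \<le> rel_ent_term y z"
proof -
  consider "y = 0" | "y > 0" "z = 0" | "y > 0" "z > 0" using y z by linarith
  thus ?thesis
  proof cases
    case 1
    have "- z + z^2/2 \<le> 0" using z by (simp add: power2_eq_square field_simps) (metis mult_left_mono mult.commute one_le_numeral order_trans)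
    thus ?thesis using 1 by (simp add: rel_ent_term_def)
  next
    case 2 thus ?thesis by (simp add: rel_ent_term_def)
  next
    case 3 thus ?thesis using rr_quad[of y z] y z by (simp add: rel_ent_term_def)
  qed
qed



lemma simplex_le1: assumes "x \<in> simplexM" shows "x$i \<le> 1" "0 \<le> x$i"
proof -
  show "0 \<le> x$i" using assms by (simp add: simplexM_def)
  have "x$i \<le> (\<Sum>j\<in>UNIV. x$j)"
    using assms by (intro member_le_sum) (auto simp: simplexM_def)
  thus "x$i \<le> 1" using assms by (simp add: simplexM_def)
qed

lemma rhoP_quad:
  assumes p: "p \<in> simplexM" and y: "y \<in> simplexM"
  shows "ereal ((\<Sum>i\<in>UNIV. (y$i - p$i)^2) / 2) \<le> rhoP p y"
proof -
  have "(\<Sum>i\<in>UNIV. ereal (y$i - p$i + (y$i - p$i)^2/2)) \<le> rhoP p y"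
    unfolding rhoP_def using simplex_le1[OF p] simplex_le1[OF y]
    by (intro sum_mono rel_ent_quad) auto
  moreover have "(\<Sum>i\<in>UNIV. y$i - p$i + (y$i - p$i)^2/2) = (\<Sum>i\<in>UNIV. (y$i - p$i)^2) / 2"
    using p y by (simp add: sum.distrib sum_subtractf sum_divide_distrib simplexM_def)
  ultimately show ?thesis by simp
qed

lemma rhoP_nonneg:
  assumes "p \<in> simplexM" "y \<in> simplexM" shows "rhoP p y \<ge> 0"
proof -
  have "(0::real) \<le> (\<Sum>i\<in>UNIV. (y$i - p$i)^2) / 2" by (intro divide_nonneg_pos sum_nonneg) auto
  hence "(0::ereal) \<le> ereal ((\<Sum>i\<in>UNIV. (y$i - p$i)^2) / 2)" by (simp add: zero_ereal_def)
  thus ?thesis using rhoP_quad[OF assms] by (rule order_trans)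
qed

lemma rhoP_self: "rhoP p p = 0"
  unfolding rhoP_def rel_ent_term_def by (intro sum.neutral) (simp add: zero_ereal_def)

lemma rhoP_zero_iff:
  assumes "p \<in> simplexM" "y \<in> simplexM" shows "rhoP p y = 0 \<longleftrightarrow> y = p"
proof
  assume "rhoP p y = 0"
  hence "(\<Sum>i\<in>UNIV. (y$i - p$i)^2) / 2 \<le> 0" using rhoP_quad[OF assms] by (simp add: zero_ereal_def)
  hence "(\<Sum>i\<in>UNIV. (y$i - p$i)^2) = 0"
    using sum_nonneg[of UNIV "\<lambda>i. (y$i-p$i)^2"] by simp
  hence "\<forall>i\<in>UNIV. (y$i - p$i)^2 = 0" by (subst (asm) sum_nonneg_eq_0_iff) auto
  thus "y = p" by (simp add: vec_eq_iff)
qed (simp add: rhoP_self)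

lemma dmax_attained: "\<exists>j. dmax x y = \<bar>x$j - y$j\<bar>"
proof -
  have "dmax x y \<in> range (\<lambda>i. \<bar>x$i - y$i\<bar>)" unfolding dmax_def by (intro Max_in) auto
  thus ?thesis by auto
qed

lemma dmax_ge: "\<bar>x$j - y$j\<bar> \<le> dmax x y"
  unfolding dmax_def by (intro Max_ge) auto

lemma rhoP_dmax:
  assumes "p \<in> simplexM" "y \<in> simplexM" "dmax p y > \<beta>" "\<beta> > 0"
  shows "ereal (\<beta>^2 / 2) \<le> rhoP p y"
proof -
  obtain j where j: "dmax p y = \<bar>p$j - y$j\<bar>" using dmax_attained by blast
  have "\<beta>^2 \<le> (y$j - p$j)^2"
  proof -
    have "\<beta> \<le> \<bar>y$j - p$j\<bar>" using assms j by (simp add: abs_minus_commute)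
    hence "\<beta>^2 \<le> \<bar>y$j - p$j\<bar>^2" using assms by (intro power_mono) auto
    thus ?thesis by simp
  qed
  also have "\<dots> \<le> (\<Sum>i\<in>UNIV. (y$i - p$i)^2)" by (intro member_le_sum) auto
  finally have "ereal (\<beta>^2/2) \<le> ereal ((\<Sum>i\<in>UNIV. (y$i - p$i)^2) / 2)" by simp
  thus ?thesis using rhoP_quad[OF assms(1,2)] by (rule order_trans)
qed



lemma types_subset: "{n::'k::finite \<Rightarrow> nat. sum n UNIV = N} \<subseteq> Pi\<^sub>E UNIV (\<lambda>_. {..N})"
proof
  fix n :: "'k \<Rightarrow> nat" assume "n \<in> {n. sum n UNIV = N}"
  hence "\<And>i. n i \<le> N" using member_le_sum[of _ UNIV n] by auto
  thus "n \<in> Pi\<^sub>E UNIV (\<lambda>_. {..N})" by (auto simp: PiE_UNIV_domain)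
qed

lemma finite_types: "finite {n::'k::finite \<Rightarrow> nat. sum n UNIV = N}"
proof -
  have fin: "finite (Pi\<^sub>E (UNIV::'k set) (\<lambda>_. {..N}))" by (rule finite_PiE) auto
  show ?thesis by (rule finite_subset[OF types_subset fin])
qed

lemma finite_types2: "finite {n::'k::finite \<Rightarrow> nat. sum n UNIV = N \<and> P n}"
  by (rule finite_subset[OF _ finite_types[of N]]) auto

lemma card_types: "card {n::'k::finite \<Rightarrow> nat. sum n UNIV = N \<and> P n} \<le> (N+1) ^ CARD('k)"
proof -
  have "card {n::'k::finite \<Rightarrow> nat. sum n UNIV = N \<and> P n} \<le> card (Pi\<^sub>E (UNIV::'k set) (\<lambda>_. {..N}))"
  proof (rule card_mono)
    show "finite (Pi\<^sub>E (UNIV::'k set) (\<lambda>_. {..N}))" by (rule finite_PiE) auto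
  qed (use types_subset[of N] in auto)
  also have "\<dots> = (N+1) ^ CARD('k)" by (simp add: card_PiE)
  finally show ?thesis .
qed

lemma kernel_eq: "mn_kernel F N x \<Gamma> = (\<Sum>n\<in>{n. sum n UNIV = N \<and> typv N n \<in> \<Gamma>}. mterm (F x) N n)"
  unfolding mn_kernel_def mterm_def typv_def by simp

lemma mterm_nonneg: "(\<And>i. p$i \<ge> 0) \<Longrightarrow> mterm p N n \<ge> 0"
  unfolding mterm_def by (intro mult_nonneg_nonneg divide_nonneg_pos prod_nonneg prod_pos) auto

lemma round_gen:
  fixes y :: "real^'k::finite"
  assumes y: "y \<in> simplexM" and a: "\<And>j. j \<noteq> i0 \<Longrightarrow> real (a j) \<le> real N * y$j"
  shows "\<exists>n. sum n UNIV = N \<and> (\<forall>j. j \<noteq> i0 \<longrightarrow> n j = a j)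
            \<and> real (n i0) = real N - (\<Sum>j\<in>UNIV-{i0}. real (a j))"
proof -
  define S where "S = (\<Sum>j\<in>UNIV-{i0}. a j)"
  have y0: "\<And>j. y$j \<ge> 0" using y by (simp add: simplexM_def)
  have "real S = (\<Sum>j\<in>UNIV-{i0}. real (a j))" unfolding S_def by (rule of_nat_sum)
  also have "\<dots> \<le> (\<Sum>j\<in>UNIV-{i0}. real N * y$j)"
    by (rule sum_mono) (rule a, simp)
  also have "\<dots> \<le> (\<Sum>j\<in>UNIV. real N * y$j)"
    by (rule sum_mono2) (use y0 in auto)
  also have "\<dots> = real N * (\<Sum>j\<in>UNIV. y$j)" by (rule sum_distrib_left[symmetric])
  also have "\<dots> = real N" using y by (simp add: simplexM_def)
  finally have SN: "S \<le> N" by (simp only: of_nat_le_iff)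
  define n where "n = a(i0 := N - S)"
  have "sum n UNIV = n i0 + sum n (UNIV - {i0})"
    by (rule sum.remove) auto
  also have "sum n (UNIV - {i0}) = S" unfolding S_def n_def by (intro sum.cong) auto
  also have "n i0 = N - S" unfolding n_def by simp
  finally have s1: "sum n UNIV = N" using SN by simp
  have "real (n i0) = real N - real S" unfolding n_def using SN by (simp add: of_nat_diff)
  also have "real S = (\<Sum>j\<in>UNIV-{i0}. real (a j))" unfolding S_def by (rule of_nat_sum)
  finally have s2: "real (n i0) = real N - (\<Sum>j\<in>UNIV-{i0}. real (a j))" .
  have s3: "\<forall>j. j \<noteq> i0 \<longrightarrow> n j = a j" unfolding n_def by simp
  show ?thesis using s1 s2 s3 by blast
qed

lemma rounding:
  fixes y :: "real^'k::finite"
  assumes y: "y \<in> simplexM" and N: "N > 0"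
  shows "\<exists>n. sum n UNIV = N \<and> dmax (typv N n) y \<le> real CARD('k) / real N"
proof -
  obtain i0 :: 'k where True by simp
  have k1: "real CARD('k) \<ge> 1" using finite_UNIV_card_ge_0[where 'a='k] by simp
  define a where "a j = nat \<lfloor>real N * y$j\<rfloor>" for j
  have y0: "\<And>j. y$j \<ge> 0" using y by (simp add: simplexM_def)
  have a1: "real (a j) \<le> real N * y$j" for j
    unfolding a_def using y0[of j] by (simp add: of_nat_nat)
  have a2: "real N * y$j - 1 < real (a j)" for j
    unfolding a_def using y0[of j] by (simp add: of_nat_nat)
  obtain n where n: "sum n UNIV = N" "\<And>j. j \<noteq> i0 \<Longrightarrow> n j = a j"
      "real (n i0) = real N - (\<Sum>j\<in>UNIV-{i0}. real (a j))"
    using round_gen[OF y, of i0 a N] a1 by blast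
  have "\<bar>real (n j) - real N * y$j\<bar> \<le> real CARD('k)" for j
  proof (cases "j = i0")
    case False thus ?thesis using n(2)[OF False] a1[of j] a2[of j] k1 by linarith
  next
    case True
    have ysum: "y$i0 = 1 - (\<Sum>j\<in>UNIV-{i0}. y$j)"
      using y sum.remove[of UNIV i0 "\<lambda>j. y$j"] by (simp add: simplexM_def)
    have dd: "real N * y$i0 + (\<Sum>j\<in>UNIV-{i0}. real N * y$j) = real N * (y$i0 + (\<Sum>j\<in>UNIV-{i0}. y$j))"
      by (simp add: sum_distrib_left distrib_left)
    have "real (n i0) - real N * y$i0 = (\<Sum>j\<in>UNIV-{i0}. real N * y$j - real (a j))"
      using n(3) ysum dd by (simp add: sum_subtractf sum_distrib_left algebra_simps)
    moreover have "(\<Sum>j\<in>UNIV-{i0}. real N * y$j - real (a j)) \<le> (\<Sum>j\<in>(UNIV::'k set)-{i0}. 1)"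
    proof (intro sum_mono)
      fix j show "real N * y$j - real (a j) \<le> 1" using a2[of j] by linarith
    qed
    moreover have "(\<Sum>j\<in>(UNIV::'k set)-{i0}. (1::real)) \<le> real CARD('k)"
      by (simp add: card_Diff_singleton_if)
    moreover have "0 \<le> (\<Sum>j\<in>UNIV-{i0}. real N * y$j - real (a j))"
      using a1 by (intro sum_nonneg) auto
    ultimately show ?thesis unfolding True by linarith
  qed
  hence "\<bar>typv N n $ j - y$j\<bar> \<le> real CARD('k) / real N" for j
  proof -
    have "typv N n $ j - y$j = (real (n j) - real N * y$j) / real N"
      using N by (simp add: typv_def field_simps)
    hence "\<bar>typv N n $ j - y$j\<bar> = \<bar>real (n j) - real N * y$j\<bar> / real N"
      by (simp add: abs_divide)
    thus ?thesis using \<open>\<bar>real (n j) - real N * y$j\<bar> \<le> real CARD('k)\<close> N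
      by (simp add: divide_right_mono)
  qed
  hence "dmax (typv N n) y \<le> real CARD('k) / real N"
    using dmax_attained[of "typv N n" y] by metis
  thus ?thesis using n(1) by blast
qed



lemma typv_nth: "typv N n $ i = real (n i) / real N"
  unfolding typv_def by simp

lemma typv_in_M: assumes "sum n UNIV = N" "N > 0" shows "typv N n \<in> simplexM"
  using assms by (simp add: simplexM_def typv_nth sum_divide_distrib[symmetric] of_nat_sum[symmetric])

lemma mterm_rho:
  fixes p :: "real^'k::finite"
  assumes p: "p \<in> simplexM" and N: "N > 0" and sN: "sum n UNIV = N"
    and r: "rhoP p (typv N n) = ereal r"
  shows "mterm p N n \<le> exp 2 * (real N + 1) * exp (- real N * r)"
    and "exp (- real N * r) / (exp 2 * (real N + 1)) ^ CARD('k) \<le> mterm p N n"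
proof -
  have p0: "\<And>i. p$i \<ge> 0" using p by (simp add: simplexM_def)
  have pos: "p$i > 0" if "n i > 0" for i
  proof (rule ccontr)
    assume "\<not> p$i > 0" hence "p$i = 0" using p0[of i] by simp
    hence "rhoP p (typv N n) = \<infinity>" using that N by (intro rhoP_inf[of _ i]) (auto simp: typv_nth)
    thus False using r by simp
  qed
  have "rhoP p (typv N n) = ereal (\<Sum>i\<in>UNIV. rr (typv N n $ i) (p$i))"
  proof (intro rhoP_real)
    fix i assume "typv N n $ i \<noteq> 0" hence "n i > 0" by (simp add: typv_nth)
    thus "p$i \<noteq> 0" using pos[of i] by linarith
  qed
  hence req: "r = (\<Sum>i\<in>UNIV. rr (real (n i) / real N) (p$i))" using r by (simp add: typv_nth)
  have E: "Eterm p N n = exp (- real N * r)" unfolding req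
    by (rule Eterm_exp[OF N sN p0 pos])
  show "mterm p N n \<le> exp 2 * (real N + 1) * exp (- real N * r)"
    using mterm_upper[OF p0 sN] E by simp
  show "exp (- real N * r) / (exp 2 * (real N + 1)) ^ CARD('k) \<le> mterm p N n"
    using mterm_lower[OF p0 sN] E by simp
qed

lemma mterm_inf:
  fixes p :: "real^'k::finite"
  assumes p: "p \<in> simplexM" and N: "N > 0"
    and r: "rhoP p (typv N n) = \<infinity>"
  shows "mterm p N n = 0"
proof -
  have p0: "\<And>i. p$i \<ge> 0" using p by (simp add: simplexM_def)
  have "\<not> (\<forall>i. typv N n $ i \<noteq> 0 \<longrightarrow> p$i \<noteq> 0)"
    using rhoP_real[of "typv N n" p] r by auto
  then obtain i where "typv N n $ i \<noteq> 0" "p$i = 0" by auto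
  hence "n i > 0" "p$i = 0" by (auto simp: typv_nth)
  thus ?thesis by (rule mterm_zero)
qed

lemma ereal_mult_elog: "N > 0 \<Longrightarrow> s > 0 \<Longrightarrow> ereal (1 / real N) * elog s = ereal (ln s / real N)"
  by (simp add: elog_def)

lemma kernel_upper:
  fixes p :: "real^'k::finite"
  assumes p: "p \<in> simplexM" and N: "N > 0" and G: "\<Gamma> \<subseteq> simplexM"
  shows "ereal (1 / real N) * elog (\<Sum>n\<in>{n. sum n UNIV = N \<and> typv N n \<in> \<Gamma>}. mterm p N n)
          \<le> - (INF y\<in>\<Gamma>. rhoP p y) + ereal ((2 + (real CARD('k) + 1) * ln (real N + 1)) / real N)"
proof -
  define S where "S = {n. sum n UNIV = N \<and> typv N n \<in> \<Gamma>}"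
  define s where "s = (\<Sum>n\<in>S. mterm p N n)"
  define m where "m = (INF y\<in>\<Gamma>. rhoP p y)"
  have p0: "\<And>i. p$i \<ge> 0" using p by (simp add: simplexM_def)
  have finS: "finite S" unfolding S_def by (rule finite_types2)
  have s0: "s \<ge> 0" unfolding s_def by (intro sum_nonneg mterm_nonneg p0)
  show ?thesis
  proof (cases "s = 0")
    case True
    thus ?thesis using N unfolding s_def S_def by (simp add: elog_def)
  next
    case False
    hence "s > 0" using s0 by simp
    have "\<exists>n0\<in>S. mterm p N n0 > 0"
    proof (rule ccontr)
      assume "\<not> ?thesis" hence "s \<le> 0" unfolding s_def by (intro sum_nonpos) (auto simp: not_less)
      thus False using \<open>s > 0\<close> by simp
    qed
    then obtain n0 where n0: "n0 \<in> S" "mterm p N n0 > 0" by blast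
    have n0M: "typv N n0 \<in> \<Gamma>" "sum n0 UNIV = N" using n0 by (auto simp: S_def)
    have "rhoP p (typv N n0) \<noteq> \<infinity>" using mterm_inf[OF p N, of n0] n0 by auto
    moreover have "rhoP p (typv N n0) \<ge> 0" using rhoP_nonneg[OF p] n0M G by auto
    ultimately obtain r0 where r0: "rhoP p (typv N n0) = ereal r0" by (cases "rhoP p (typv N n0)") auto
    have "m \<le> ereal r0" unfolding m_def using n0M r0 by (metis INF_lower)
    moreover have "m \<ge> 0" unfolding m_def using rhoP_nonneg[OF p] G by (intro INF_greatest) auto
    ultimately obtain mr where mr: "m = ereal mr" "mr \<ge> 0" by (cases m) auto
    have each: "mterm p N n \<le> exp 2 * (real N + 1) * exp (- real N * mr)" if "n \<in> S" for n
    proof -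
      have nM: "typv N n \<in> \<Gamma>" "sum n UNIV = N" using that by (auto simp: S_def)
      show ?thesis
      proof (cases "rhoP p (typv N n) = \<infinity>")
        case True thus ?thesis using mterm_inf[OF p N True] by simp
      next
        case False
        moreover have "rhoP p (typv N n) \<ge> 0" using rhoP_nonneg[OF p] nM G by auto
        ultimately obtain r where r: "rhoP p (typv N n) = ereal r" by (cases "rhoP p (typv N n)") auto
        have "m \<le> ereal r" unfolding m_def using nM r by (metis INF_lower)
        hence "mr \<le> r" using mr by simp
        hence "real N * mr \<le> real N * r" by (intro mult_left_mono) auto
        hence "exp (- real N * r) \<le> exp (- real N * mr)" by simp
        thus ?thesis using mterm_rho(1)[OF p N nM(2) r]
          by (meson exp_gt_zero less_eq_real_def mult_left_mono mult_pos_pos of_nat_0_le_iff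
              add_nonneg_pos zero_less_one order_trans)
      qed
    qed
    have "s \<le> (\<Sum>n\<in>S. exp 2 * (real N + 1) * exp (- real N * mr))"
      unfolding s_def by (intro sum_mono each)
    also have "\<dots> = real (card S) * (exp 2 * (real N + 1) * exp (- real N * mr))" by simp
    also have "\<dots> \<le> (real N + 1) ^ CARD('k) * (exp 2 * (real N + 1) * exp (- real N * mr))"
    proof (intro mult_right_mono)
      have "card S \<le> (N+1) ^ CARD('k)" unfolding S_def by (rule card_types)
      hence "real (card S) \<le> real ((N+1) ^ CARD('k))" by (simp only: of_nat_le_iff)
      thus "real (card S) \<le> (real N + 1) ^ CARD('k)" by (simp add: add.commute)
    qed auto
    finally have sb: "s \<le> (real N + 1) ^ CARD('k) * (exp 2 * (real N + 1) * exp (- real N * mr))" .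
    have "ln s \<le> ln ((real N + 1) ^ CARD('k) * (exp 2 * (real N + 1) * exp (- real N * mr)))"
      using sb \<open>s > 0\<close> by simp
    also have "\<dots> = real CARD('k) * ln (real N + 1) + 2 + ln (real N + 1) - real N * mr"
      by (simp add: ln_mult ln_realpow)
    finally have "ln s / real N \<le> - mr + (2 + (real CARD('k) + 1) * ln (real N + 1)) / real N"
      using N by (simp add: field_simps)
    thus ?thesis using ereal_mult_elog[OF N \<open>s > 0\<close>] mr
      unfolding s_def[symmetric] S_def[symmetric] m_def[symmetric] by simp
  qed
qed

lemma kernel_lower:
  fixes p :: "real^'k::finite"
  assumes p: "p \<in> simplexM" and N: "N > 0" and sN: "sum n UNIV = N" and nG: "typv N n \<in> \<Gamma>"
    and r: "rhoP p (typv N n) = ereal r"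
  shows "ereal (- r - real CARD('k) * (2 + ln (real N + 1)) / real N)
          \<le> ereal (1 / real N) * elog (\<Sum>n\<in>{n. sum n UNIV = N \<and> typv N n \<in> \<Gamma>}. mterm p N n)"
proof -
  define S where "S = {n. sum n UNIV = N \<and> typv N n \<in> \<Gamma>}"
  define s where "s = (\<Sum>n\<in>S. mterm p N n)"
  have p0: "\<And>i. p$i \<ge> 0" using p by (simp add: simplexM_def)
  have finS: "finite S" unfolding S_def by (rule finite_types2)
  have nS: "n \<in> S" using sN nG by (simp add: S_def)
  have lb: "exp (- real N * r) / (exp 2 * (real N + 1)) ^ CARD('k) \<le> mterm p N n"
    by (rule mterm_rho(2)[OF p N sN r])
  have "mterm p N n \<le> s" unfolding s_def using finS nS
    by (intro member_le_sum mterm_nonneg p0) auto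
  hence sl: "exp (- real N * r) / (exp 2 * (real N + 1)) ^ CARD('k) \<le> s" using lb by simp
  have pos: "exp (- real N * r) / (exp 2 * (real N + 1)) ^ CARD('k) > 0" by simp
  have s: "s > 0" using pos sl by (rule less_le_trans)
  have "ln (exp (- real N * r) / (exp 2 * (real N + 1)) ^ CARD('k)) \<le> ln s"
    using sl pos by (intro ln_mono) auto
  moreover have "ln (exp (- real N * r) / (exp 2 * (real N + 1)) ^ CARD('k))
      = - real N * r - real CARD('k) * (2 + ln (real N + 1))"
    by (simp add: ln_div ln_realpow ln_mult)
  ultimately have "- real N * r - real CARD('k) * (2 + ln (real N + 1)) \<le> ln s" by linarith
  hence "(- real N * r - real CARD('k) * (2 + ln (real N + 1))) / real N \<le> ln s / real N"
    by (intro divide_right_mono) auto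
  moreover have "(- real N * r - real CARD('k) * (2 + ln (real N + 1))) / real N
      = - r - real CARD('k) * (2 + ln (real N + 1)) / real N" using N by (simp add: field_simps)
  ultimately have "- r - real CARD('k) * (2 + ln (real N + 1)) / real N \<le> ln s / real N" by simp
  thus ?thesis using ereal_mult_elog[OF N s] unfolding s_def S_def by simp
qed



lemma xlnx_cont: "continuous_on {0..} (\<lambda>x::real. x * ln x)"
proof (rule continuous_on_eq_continuous_within[THEN iffD2], intro ballI)
  fix x :: real assume x: "x \<in> {0..}"
  show "continuous (at x within {0..}) (\<lambda>x. x * ln x)"
  proof (cases "x = 0")
    case True
    have "((\<lambda>x::real. x * ln x) \<longlongrightarrow> 0) (at_right 0)" by real_asymp
    thus ?thesis using True by (simp add: continuous_within at_within_Ici_at_right)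
  next
    case False
    hence "x > 0" using x by simp
    hence "isCont (\<lambda>x. x * ln x) x" by (intro continuous_intros) auto
    thus ?thesis by (rule continuous_at_imp_continuous_at_within)
  qed
qed

lemma M1_pos: assumes "x \<in> simplexM1" shows "x$i > 0" "x \<in> simplexM"
proof -
  show xM: "x \<in> simplexM" using assms by (simp add: simplexM1_def)
  have "(\<Prod>i\<in>UNIV. x$i) \<noteq> 0" using assms by (simp add: simplexM1_def simplexM0_def)
  hence "x$i \<noteq> 0" by auto
  thus "x$i > 0" using xM by (simp add: simplexM_def less_le)
qed

lemma rho_cont_real:
  fixes f :: "real^'k::finite \<Rightarrow> real^'k" and F :: "real^'k \<Rightarrow> real^'k"
  assumes F_def: "\<And>x. F x = (\<chi> i. x$i * f x $ i)"
    and f_pos: "\<And>x i. x \<in> simplexM \<Longrightarrow> f x $ i > 0"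
    and f_cont: "continuous_on simplexM f"
  shows "\<exists>G. continuous_on (simplexM1 \<times> simplexM) G \<and>
     (\<forall>x\<in>simplexM1. \<forall>y\<in>simplexM. rhoF F x y = ereal (G (x,y)))"
proof -
  have Fpos: "F x $ i > 0" if "x \<in> simplexM1" for x i
    using M1_pos[OF that] f_pos[of x i] by (simp add: F_def)
  have Fc: "continuous_on simplexM F"
    unfolding F_def[abs_def] by (intro continuous_intros f_cont)
  have M1M: "simplexM1 \<subseteq> simplexM" by (auto simp: simplexM1_def)
  define G where "G = (\<lambda>(x::real^'k,y::real^'k). \<Sum>i\<in>UNIV. (y$i) * ln (y$i) - y$i * ln (F x $ i))"
  have eq: "rhoF F x y = ereal (G (x,y))" if "(x,y) \<in> simplexM1 \<times> simplexM" for x y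
  proof -
    have y0: "\<And>i. y$i \<ge> 0" using that by (auto simp: simplexM_def)
    have xM1: "x \<in> simplexM1" using that by auto
    have "rhoF F x y = ereal (\<Sum>i\<in>UNIV. rr (y$i) (F x $ i))"
      unfolding rhoF_eq using Fpos[OF xM1] by (intro rhoP_real) (metis less_irrefl)
    also have "(\<Sum>i\<in>UNIV. rr (y$i) (F x $ i)) = G (x,y)" unfolding G_def
    proof (simp, intro sum.cong refl)
      fix i
      show "rr (y$i) (F x $ i) = y$i * ln (y$i) - y$i * ln (F x $ i)"
      proof (cases "y$i = 0")
        case True thus ?thesis by (simp add: rr_def)
      next
        case False thus ?thesis using y0[of i] Fpos[OF xM1, of i]
          by (simp add: rr_def ln_div right_diff_distrib)
      qed
    qed
    finally show ?thesis .
  qed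
  have c1: "continuous_on (simplexM1 \<times> simplexM) (\<lambda>p. snd p $ i * ln (snd p $ i))" for i
  proof (rule continuous_on_compose2[OF xlnx_cont])
    show "continuous_on (simplexM1 \<times> simplexM) (\<lambda>p. snd p $ i)" by (intro continuous_intros)
    show "(\<lambda>p. snd p $ i) ` (simplexM1 \<times> simplexM) \<subseteq> {0..}" by (auto simp: simplexM_def)
  qed
  have c0: "continuous_on (simplexM1 \<times> simplexM) (\<lambda>p. F (fst p))"
    by (rule continuous_on_compose2[OF Fc]) (use M1M in \<open>auto intro: continuous_intros\<close>)
  have c2: "continuous_on (simplexM1 \<times> simplexM) (\<lambda>p. snd p $ i * ln (F (fst p) $ i))" for i
  proof (intro continuous_intros c0)
    show "\<forall>p\<in>simplexM1 \<times> simplexM. F (fst p) $ i \<noteq> 0"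
      using Fpos by (metis mem_Times_iff less_irrefl)
  qed
  have Gc: "continuous_on (simplexM1 \<times> simplexM) G"
    unfolding G_def case_prod_unfold by (intro continuous_on_sum continuous_on_diff c1 c2)
  show ?thesis using Gc eq by blast
qed

lemma rho_cont:
  fixes f :: "real^'k::finite \<Rightarrow> real^'k" and F :: "real^'k \<Rightarrow> real^'k"
  assumes F_def: "\<And>x. F x = (\<chi> i. x$i * f x $ i)"
    and f_pos: "\<And>x i. x \<in> simplexM \<Longrightarrow> f x $ i > 0"
    and f_cont: "continuous_on simplexM f"
  shows "continuous_on (simplexM1 \<times> simplexM) (\<lambda>(x,y). rhoF F x y)"
proof -
  obtain G where Gc: "continuous_on (simplexM1 \<times> simplexM) G"
    and eq: "\<forall>x\<in>simplexM1. \<forall>y\<in>simplexM. rhoF F x y = ereal (G (x,y))"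
    using rho_cont_real[OF assms] by blast
  have "continuous_on (simplexM1 \<times> simplexM) (\<lambda>p. ereal (G p))"
    by (intro continuous_on_ereal Gc)
  thus ?thesis by (rule continuous_on_cong[THEN iffD1, rotated 2]) (auto simp: eq)
qed



lemma dmax_nonneg: "dmax x y \<ge> 0"
  using dmax_ge[of x _ y] by (meson abs_ge_zero order_trans)

lemma dmax_comm: "dmax x y = dmax y x"
  unfolding dmax_def by (simp add: abs_minus_commute)

lemma dmax_le: "(\<And>i. \<bar>x$i - y$i\<bar> \<le> b) \<Longrightarrow> dmax x y \<le> b"
  using dmax_attained[of x y] by metis

lemma dmax_triangle: "dmax x z \<le> dmax x y + dmax y z"
proof (rule dmax_le)
  fix i
  have "\<bar>x$i - z$i\<bar> \<le> \<bar>x$i - y$i\<bar> + \<bar>y$i - z$i\<bar>" by linarith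
  thus "\<bar>x$i - z$i\<bar> \<le> dmax x y + dmax y z" using dmax_ge[of x i y] dmax_ge[of y i z] by linarith
qed

lemma dmax_self: "dmax x x = 0"
  using dmax_le[of x x 0] dmax_nonneg[of x x] by simp

lemma dmax_M_le1: assumes "x \<in> simplexM" "y \<in> simplexM" shows "dmax x y \<le> 1"
proof (rule dmax_le)
  fix i show "\<bar>x$i - y$i\<bar> \<le> 1" using simplex_le1[OF assms(1), of i] simplex_le1[OF assms(2), of i] by linarith
qed

lemma norm_le_dmax: "norm (x - y) \<le> real CARD('k) * dmax x (y::real^'k::finite)"
proof -
  have "norm (x - y) \<le> (\<Sum>i\<in>UNIV. \<bar>(x - y)$i\<bar>)" by (rule norm_le_l1_cart)
  also have "\<dots> \<le> (\<Sum>i\<in>(UNIV::'k set). dmax x y)" by (intro sum_mono) (simp add: dmax_ge)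
  also have "\<dots> = real CARD('k) * dmax x y" by simp
  finally show ?thesis .
qed

lemma compact_M: "compact (simplexM :: (real^'k::finite) set)"
proof -
  have eq: "(simplexM :: (real^'k) set) = (\<Inter>i. {x. 0 \<le> x$i}) \<inter> {x. (\<Sum>i\<in>UNIV. x$i) = 1}"
    by (auto simp: simplexM_def)
  have "closed (simplexM :: (real^'k) set)" unfolding eq
    by (intro closed_Int closed_INT ballI closed_Collect_le closed_Collect_eq continuous_intros)
  moreover have "bounded (simplexM :: (real^'k) set)"
  proof (rule boundedI)
    fix x :: "real^'k" assume x: "x \<in> simplexM"
    have "norm x \<le> (\<Sum>i\<in>UNIV. \<bar>x$i\<bar>)" by (rule norm_le_l1_cart)
    also have "\<dots> = (\<Sum>i\<in>UNIV. x$i)" using x by (intro sum.cong) (auto simp: simplexM_def)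
    also have "\<dots> = 1" using x by (simp add: simplexM_def)
    finally show "norm x \<le> 1" .
  qed
  ultimately show ?thesis by (simp add: compact_eq_bounded_closed)
qed

lemma conv_M: assumes "y \<in> simplexM" "c \<in> simplexM" "0 \<le> t" "t \<le> 1"
  shows "(1 - t) *\<^sub>R y + t *\<^sub>R c \<in> simplexM"
proof -
  have "(\<Sum>i\<in>UNIV. (1 - t) * y$i + t * c$i) = (1 - t) * (\<Sum>i\<in>UNIV. y$i) + t * (\<Sum>i\<in>UNIV. c$i)"
    by (simp add: sum.distrib sum_distrib_left)
  thus ?thesis using assms by (auto simp: simplexM_def)
qed

lemma conv_dmax: "dmax c ((1 - t) *\<^sub>R y + t *\<^sub>R c) \<le> (1 - t) * dmax c y" if "0 \<le> t" "t \<le> 1"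
proof (rule dmax_le)
  fix i
  have "c$i - ((1 - t) *\<^sub>R y + t *\<^sub>R c)$i = (1 - t) * (c$i - y$i)" by (simp add: algebra_simps)
  hence "\<bar>c$i - ((1 - t) *\<^sub>R y + t *\<^sub>R c)$i\<bar> = (1 - t) * \<bar>c$i - y$i\<bar>" using that by (simp add: abs_mult)
  also have "\<dots> \<le> (1 - t) * dmax c y" using that by (intro mult_left_mono dmax_ge) auto
  finally show "\<bar>c$i - ((1 - t) *\<^sub>R y + t *\<^sub>R c)$i\<bar> \<le> (1 - t) * dmax c y" .
qed

lemma conv_norm: "norm (((1 - t) *\<^sub>R y + t *\<^sub>R c) - y) = t * norm (c - y)" if "0 \<le> t"
proof -
  have "((1 - t) *\<^sub>R y + t *\<^sub>R c) - y = t *\<^sub>R (c - y)" by (simp add: algebra_simps)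
  thus ?thesis using that by simp
qed



lemma eventually_N0:
  fixes a b c :: real
  assumes "a > 0" "b > 0" "d > 0"
  shows "\<exists>N0\<ge>1. \<forall>N\<ge>N0. real CARD('k::finite) / real N \<le> a \<and> real CARD('k) * real CARD('k) / real N < b
          \<and> real CARD('k) * (2 + ln (real N + 1)) / real N \<le> d"
proof -
  define k where "k = real CARD('k)"
  have l1: "(\<lambda>N::nat. k / real N) \<longlonglongrightarrow> 0" by real_asymp
  have l2: "(\<lambda>N::nat. k * k / real N) \<longlonglongrightarrow> 0" by real_asymp
  have l3: "(\<lambda>N::nat. k * (2 + ln (real N + 1)) / real N) \<longlonglongrightarrow> 0" by real_asymp
  have "eventually (\<lambda>N. k / real N < a) sequentially" using order_tendstoD(2)[OF l1 assms(1)] .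
  moreover have "eventually (\<lambda>N. k * k / real N < b) sequentially" using order_tendstoD(2)[OF l2 assms(2)] .
  moreover have "eventually (\<lambda>N. k * (2 + ln (real N + 1)) / real N < d) sequentially"
    using order_tendstoD(2)[OF l3 assms(3)] .
  ultimately have "eventually (\<lambda>N. k / real N < a \<and> k * k / real N < b \<and> k * (2 + ln (real N + 1)) / real N < d) sequentially"
    by eventually_elim auto
  then obtain N1 where N1: "\<And>N. N \<ge> N1 \<Longrightarrow> k / real N < a \<and> k * k / real N < b \<and> k * (2 + ln (real N + 1)) / real N < d"
    unfolding eventually_sequentially by blast
  show ?thesis
    by (rule exI[of _ "max N1 1"]) (use N1 in \<open>auto simp: k_def less_imp_le\<close>)
qed

lemma LD_lower:
  fixes f :: "real^'k::finite \<Rightarrow> real^'k" and F :: "real^'k \<Rightarrow> real^'k"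
  assumes F_def: "\<And>x. F x = (\<chi> i. x$i * f x $ i)"
    and f_pos: "\<And>x i. x \<in> simplexM \<Longrightarrow> f x $ i > 0"
    and f_cont: "continuous_on simplexM f"
    and F_maps: "\<And>x. x \<in> simplexM \<Longrightarrow> F x \<in> simplexM"
    and K: "compact K" "K \<subseteq> simplexM1" and U: "is_open_ballM U" and eta: "\<eta> > 0"
  shows "\<exists>\<epsilon>0>0. \<forall>N. N > 0 \<and> 1 / real N < \<epsilon>0 \<longrightarrow>
           (\<forall>x\<in>K. ereal (1 / real N) * elog (mn_kernel F N x U)
                     \<ge> - (INF y\<in>U. rhoF F x y) - ereal \<eta>)"
proof -
  obtain G where Gc: "continuous_on (simplexM1 \<times> simplexM) G"
    and eq: "\<And>x y. x \<in> simplexM1 \<Longrightarrow> y \<in> simplexM \<Longrightarrow> rhoF F x y = ereal (G (x,y))"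
    using rho_cont_real[OF F_def f_pos f_cont] by blast
  obtain c r where c: "c \<in> simplexM" and r: "r > 0" and Ueq: "U = {y \<in> simplexM. dmax c y < r}"
    using U unfolding is_open_ballM_def by blast
  define k where "k = real CARD('k)"
  have k1: "k \<ge> 1" unfolding k_def using finite_UNIV_card_ge_0[where 'a='k] by simp
  have KM1: "K \<times> simplexM \<subseteq> simplexM1 \<times> simplexM" using K by auto
  have cK: "compact (K \<times> simplexM)" using K compact_M by (intro compact_Times)
  have "uniformly_continuous_on (K \<times> simplexM) G"
    by (intro compact_uniformly_continuous cK continuous_on_subset[OF Gc KM1])
  then obtain \<delta> where \<delta>: "\<delta> > 0"
    and uc: "\<And>p p'. p \<in> K \<times> simplexM \<Longrightarrow> p' \<in> K \<times> simplexM \<Longrightarrow> dist p' p < \<delta> \<Longrightarrow> dist (G p') (G p) < \<eta>/4"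
    unfolding uniformly_continuous_on_def using eta by (metis divide_pos_pos zero_less_numeral)
  define t where "t = min (1/2) (\<delta> / (2 * k))"
  have t0: "t > 0" "t \<le> 1/2" using \<delta> k1 by (auto simp: t_def)
  have tk: "t * k \<le> \<delta> / 2"
  proof -
    have "t \<le> \<delta> / (2 * k)" by (simp add: t_def)
    hence "t * k \<le> \<delta> / (2 * k) * k" using k1 by (intro mult_right_mono) auto
    thus ?thesis using k1 by simp
  qed
  obtain N0 :: nat where N0: "N0 \<ge> 1" and N0b: "\<And>N. N \<ge> N0 \<Longrightarrow> k / real N \<le> t * r \<and> k * k / real N < \<delta>/2
      \<and> k * (2 + ln (real N + 1)) / real N \<le> \<eta>/2"
    using eventually_N0[of "t * r" "\<delta>/2" "\<eta>/2", where 'k='k] t0 r \<delta> eta unfolding k_def by auto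
  show ?thesis
  proof (intro exI[of _ "1 / real N0"] conjI allI impI ballI)
    show "1 / real N0 > 0" using N0 by simp
    fix N :: nat and x assume NN: "N > 0 \<and> 1 / real N < 1 / real N0" and xK: "x \<in> K"
    have N: "N > 0" using NN by simp
    have "real N0 < real N"
    proof (rule ccontr)
      assume "\<not> real N0 < real N" hence "real N \<le> real N0" by simp
      hence "1 / real N0 \<le> 1 / real N" using N by (intro divide_left_mono) auto
      thus False using NN by simp
    qed
    hence bounds: "k / real N \<le> t * r" "k * k / real N < \<delta>/2" "k * (2 + ln (real N + 1)) / real N \<le> \<eta>/2"
      using N0b[of N] by auto
    have xM1: "x \<in> simplexM1" using xK K by auto
    have xM: "x \<in> simplexM" using xM1 by (simp add: simplexM1_def)
    have pM: "F x \<in> simplexM" by (rule F_maps[OF xM])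
    define m where "m = (INF y\<in>U. rhoF F x y)"
    have cU: "c \<in> U" using c r by (simp add: Ueq dmax_self)
    have UM: "U \<subseteq> simplexM" by (auto simp: Ueq)
    have "m \<le> rhoF F x c" unfolding m_def using cU by (rule INF_lower)
    hence mfin: "m \<noteq> \<infinity>" using eq[OF xM1 c] by auto
    have "m \<ge> 0" unfolding m_def rhoF_eq using rhoP_nonneg[OF pM] UM by (intro INF_greatest) auto
    then obtain mr where mr: "m = ereal mr" using mfin by (cases m) auto
    have "(INF y\<in>U. rhoF F x y) < ereal (mr + \<eta>/4)" using mr eta m_def by simp
    then obtain y where yU: "y \<in> U" and yl: "rhoF F x y < ereal (mr + \<eta>/4)"
      by (auto simp: INF_less_iff)
    have yM: "y \<in> simplexM" and ycr: "dmax c y < r" using yU by (auto simp: Ueq)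
    have Gy: "G (x,y) < mr + \<eta>/4" using yl eq[OF xM1 yM] mr by simp
    define y' where "y' = (1 - t) *\<^sub>R y + t *\<^sub>R c"
    have y'M: "y' \<in> simplexM" unfolding y'_def using yM c t0 by (intro conv_M) auto
    have "dmax c y' \<le> (1 - t) * dmax c y" unfolding y'_def using t0 by (intro conv_dmax) auto
    also have "\<dots> < (1 - t) * r" using ycr t0 by (intro mult_strict_left_mono) auto
    finally have cy': "dmax c y' < (1 - t) * r" .
    have "norm (y' - y) = t * norm (c - y)" unfolding y'_def using t0 by (intro conv_norm) auto
    also have "\<dots> \<le> t * (k * dmax c y)" using t0 norm_le_dmax[of c y] unfolding k_def
      by (intro mult_left_mono) auto
    also have "\<dots> \<le> t * k" using t0 k1 dmax_M_le1[OF c yM] by (simp add: mult_left_le)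
    also have "\<dots> \<le> \<delta>/2" by (rule tk)
    finally have ny'y: "norm (y' - y) \<le> \<delta>/2" .
    obtain n where sn: "sum n UNIV = N" and nd: "dmax (typv N n) y' \<le> real CARD('k) / real N"
      using rounding[OF y'M N] by blast
    define q where "q = typv N n"
    have qM: "q \<in> simplexM" unfolding q_def using sn N by (rule typv_in_M)
    have "dmax c q \<le> dmax c y' + dmax y' q" by (rule dmax_triangle)
    also have "dmax y' q \<le> k / real N" using nd unfolding q_def k_def by (simp add: dmax_comm)
    finally have "dmax c q < r" using cy' bounds(1) by (simp add: algebra_simps)
    hence qU: "q \<in> U" using qM by (simp add: Ueq)
    have t1: "norm (q - y) \<le> norm (q - y') + norm (y' - y)" by (rule norm_diff_triangle_le[of q y' _ y]) auto
    have t2: "norm (q - y') \<le> k * (k / real N)" using norm_le_dmax[of q y'] nd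
      unfolding q_def k_def by (meson mult_left_mono of_nat_0_le_iff order_trans)
    have "k * (k / real N) = k * k / real N" by simp
    hence "norm (q - y) < \<delta>" using t1 t2 ny'y bounds(2) by linarith
    hence "dist (x, q) (x, y) < \<delta>" by (simp add: dist_Pair_Pair dist_norm)
    hence "dist (G (x,q)) (G (x,y)) < \<eta>/4" using xK qM yM by (intro uc) auto
    hence Gq: "G (x,q) < mr + \<eta>/2" using Gy unfolding dist_real_def by linarith
    have rq: "rhoP (F x) (typv N n) = ereal (G (x,q))" using eq[OF xM1 qM] unfolding q_def rhoF_eq .
    have L1: "ereal (- G (x,q) - real CARD('k) * (2 + ln (real N + 1)) / real N)
          \<le> ereal (1 / real N) * elog (mn_kernel F N x U)"
      unfolding kernel_eq by (rule kernel_lower[OF pM N sn _ rq]) (use qU in \<open>simp add: q_def\<close>)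
    have L2: "- G (x,q) - real CARD('k) * (2 + ln (real N + 1)) / real N \<ge> - mr - \<eta>"
      using Gq bounds(3) unfolding k_def by linarith
    show "ereal (1 / real N) * elog (mn_kernel F N x U) \<ge> - (INF y\<in>U. rhoF F x y) - ereal \<eta>"
    proof -
      have e: "- (INF y\<in>U. rhoF F x y) - ereal \<eta> = ereal (- mr - \<eta>)"
        using mr unfolding m_def[symmetric] by simp
      show ?thesis unfolding e using L1 L2 by (meson ereal_less_eq(3) order_trans)
    qed
  qed
qed



lemma rr_nonpos: assumes "0 \<le> y" "y \<le> z" shows "rr y z \<le> 0"
proof (cases "y = 0")
  case True thus ?thesis by (simp add: rr_def)
next
  case False
  hence y: "y > 0" "z > 0" using assms by auto
  have "ln (y / z) \<le> 0" using y assms by (simp add: ln_div)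
  thus ?thesis using y by (simp add: rr_def mult_nonneg_nonpos)
qed

lemma rr_upper: assumes "0 < y" "0 < z" shows "rr y z \<le> y * (y - z) / z"
proof -
  have "ln (y / z) \<le> y / z - 1" using assms by (intro ln_le_minus_one) auto
  hence "y * ln (y / z) \<le> y * (y / z - 1)" using assms by (intro mult_left_mono) auto
  also have "\<dots> = y * (y - z) / z" using assms by (simp add: field_simps)
  finally show ?thesis using assms by (simp add: rr_def)
qed

lemma ld0_point:
  fixes p :: "real^'k::finite"
  assumes p: "p \<in> simplexM" and N: "N > 0" and pi: "p$i \<le> e" and ek: "e * real CARD('k) < 1"
  shows "ereal (- real CARD('k) * (e + real CARD('k) / real N) - real CARD('k) * (2 + ln (real N + 1)) / real N)
     \<le> ereal (1 / real N) * elog (\<Sum>n\<in>{n. sum n UNIV = N \<and> typv N n \<in> simplexM0}. mterm p N n)"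
proof -
  define k where "k = real CARD('k)"
  have k1: "k \<ge> 1" unfolding k_def using finite_UNIV_card_ge_0[where 'a='k] by simp
  have p0: "\<And>j. p$j \<ge> 0" using p by (simp add: simplexM_def)
  have "Max (range (\<lambda>j. p$j)) \<in> range (\<lambda>j. p$j)" by (intro Max_in) auto
  then obtain i0 where i0eq: "p$i0 = Max (range (\<lambda>j. p$j))" by (metis imageE)
  have i0max: "p$j \<le> p$i0" for j unfolding i0eq by (intro Max_ge) auto
  have "1 = (\<Sum>j\<in>UNIV. p$j)" using p by (simp add: simplexM_def)
  also have "\<dots> \<le> (\<Sum>j\<in>(UNIV::'k set). p$i0)" by (intro sum_mono i0max)
  also have "\<dots> = k * p$i0" by (simp add: k_def)
  finally have pi0: "k * p$i0 \<ge> 1" .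
  have pi0pos: "p$i0 > 0" using pi0 k1 by (metis mult_zero_right not_le not_one_le_zero order.not_eq_order_implies_strict p0)
  have "i \<noteq> i0"
  proof
    assume "i = i0"
    hence "k * p$i0 \<le> k * e" using pi k1 by (intro mult_left_mono) auto
    moreover have "k * e < 1" using ek unfolding k_def by (simp add: mult.commute)
    ultimately show False using pi0 by linarith
  qed
  define a where "a j = (if j = i then 0 else nat \<lfloor>real N * p$j\<rfloor>)" for j
  have a1: "real (a j) \<le> real N * p$j" for j
    unfolding a_def using p0[of j] p0[of i] by (simp add: of_nat_nat)
  have a2: "real N * p$j - real (a j) \<le> (if j = i then real N * e else 1)" for j
    unfolding a_def using p0[of j] pi N by (auto simp: of_nat_nat) linarith
  obtain n where sn: "sum n UNIV = N" and nj: "\<And>j. j \<noteq> i0 \<Longrightarrow> n j = a j"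
    and ni0: "real (n i0) = real N - (\<Sum>j\<in>UNIV-{i0}. real (a j))"
    using round_gen[OF p, of i0 a N] a1 by blast
  define q where "q = typv N n"
  have qM: "q \<in> simplexM" unfolding q_def using sn N by (rule typv_in_M)
  have qj: "q$j = real (n j) / real N" for j by (simp add: q_def typv_nth)
  have qi: "q$i = 0" using nj[OF \<open>i \<noteq> i0\<close>] by (simp add: qj a_def)
  have qM0: "q \<in> simplexM0" using qM qi by (auto simp: simplexM0_def intro!: prod_zero)
  have qle: "q$j \<le> p$j" if "j \<noteq> i0" for j
    using a1[of j] nj[OF that] N by (simp add: qj field_simps)
  have q0: "q$j \<ge> 0" for j by (simp add: qj)
  have psum: "p$i0 = 1 - (\<Sum>j\<in>UNIV-{i0}. p$j)"
    using p sum.remove[of UNIV i0 "\<lambda>j. p$j"] by (simp add: simplexM_def)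
  have dd: "real N * (q$i0 - p$i0) = (\<Sum>j\<in>UNIV-{i0}. real N * p$j - real (a j))"
  proof -
    have "real N * q$i0 = real (n i0)" using N by (simp add: qj)
    moreover have "real N * p$i0 = real N - (\<Sum>j\<in>UNIV-{i0}. real N * p$j)"
      using psum by (simp add: right_diff_distrib sum_distrib_left)
    ultimately show ?thesis using ni0 by (simp add: right_diff_distrib sum_subtractf)
  qed
  have dsum_le: "(\<Sum>j\<in>UNIV-{i0}. real N * p$j - real (a j)) \<le> real N * e + k"
  proof -
    have iin: "i \<in> UNIV - {i0}" using \<open>i \<noteq> i0\<close> by simp
    have "(\<Sum>j\<in>UNIV-{i0}. real N * p$j - real (a j))
        = (real N * p$i - real (a i)) + (\<Sum>j\<in>UNIV-{i0}-{i}. real N * p$j - real (a j))"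
      using sum.remove[OF _ iin, of "\<lambda>j. real N * p$j - real (a j)"] by simp
    also have "real N * p$i - real (a i) \<le> real N * e" using a2[of i] by simp
    also have "(\<Sum>j\<in>UNIV-{i0}-{i}. real N * p$j - real (a j)) \<le> (\<Sum>j\<in>(UNIV::'k set)-{i0}-{i}. 1)"
      using a2 by (intro sum_mono) (metis DiffD2 insertI1)
    also have "(\<Sum>j\<in>(UNIV::'k set)-{i0}-{i}. (1::real)) \<le> k"
      unfolding k_def by (simp add: card_Diff_subset) (meson card_Diff1_le card_mono diff_le_self order_trans)
    finally show ?thesis by simp
  qed
  have dsum_ge: "(\<Sum>j\<in>UNIV-{i0}. real N * p$j - real (a j)) \<ge> 0"
    using a1 by (intro sum_nonneg) auto
  have dq: "q$i0 - p$i0 \<le> e + k / real N" and dq0: "q$i0 - p$i0 \<ge> 0"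
  proof -
    have "real N * (q$i0 - p$i0) \<le> real N * (e + k / real N)"
      using dd dsum_le N by (simp add: distrib_left)
    thus "q$i0 - p$i0 \<le> e + k / real N" using N by simp
    have "real N * (q$i0 - p$i0) \<ge> 0" using dd dsum_ge by simp
    thus "q$i0 - p$i0 \<ge> 0" using N by (simp add: zero_le_mult_iff)
  qed
  have fin: "\<And>j. q$j \<noteq> 0 \<Longrightarrow> p$j \<noteq> 0"
  proof -
    fix j assume "q$j \<noteq> 0"
    show "p$j \<noteq> 0"
    proof (cases "j = i0")
      case True thus ?thesis using pi0pos by simp
    next
      case False thus ?thesis using qle[OF False] q0[of j] \<open>q$j \<noteq> 0\<close> by auto
    qed
  qed
  have r: "rhoP p q = ereal (\<Sum>j\<in>UNIV. rr (q$j) (p$j))" by (rule rhoP_real[OF fin])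
  have rb: "(\<Sum>j\<in>UNIV. rr (q$j) (p$j)) \<le> k * (e + k / real N)"
  proof -
    have "(\<Sum>j\<in>UNIV. rr (q$j) (p$j)) = rr (q$i0) (p$i0) + (\<Sum>j\<in>UNIV-{i0}. rr (q$j) (p$j))"
      by (simp add: sum.remove)
    also have "(\<Sum>j\<in>UNIV-{i0}. rr (q$j) (p$j)) \<le> 0"
      by (intro sum_nonpos rr_nonpos q0 qle) auto
    also have "rr (q$i0) (p$i0) \<le> k * (e + k / real N)"
    proof -
      have qi0: "q$i0 > 0" using dq0 pi0pos by simp
      have "rr (q$i0) (p$i0) \<le> q$i0 * (q$i0 - p$i0) / p$i0" by (rule rr_upper[OF qi0 pi0pos])
      also have "\<dots> \<le> 1 * (q$i0 - p$i0) / p$i0"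
        using simplex_le1[OF qM, of i0] dq0 pi0pos by (intro divide_right_mono mult_right_mono) auto
      also have "\<dots> = (q$i0 - p$i0) * (1 / p$i0)" by simp
      also have "\<dots> \<le> (e + k / real N) * k"
      proof (intro mult_mono dq)
        show "1 / p$i0 \<le> k" using pi0 pi0pos by (simp add: field_simps mult.commute)
      qed (use dq0 dq k1 pi0pos in \<open>auto intro: order_trans[OF dq0 dq]\<close>)
      finally show ?thesis by (simp add: mult.commute)
    qed
    finally show ?thesis by simp
  qed
  have "ereal (- (\<Sum>j\<in>UNIV. rr (q$j) (p$j)) - real CARD('k) * (2 + ln (real N + 1)) / real N)
     \<le> ereal (1 / real N) * elog (\<Sum>n\<in>{n. sum n UNIV = N \<and> typv N n \<in> simplexM0}. mterm p N n)"
  proof (rule kernel_lower[OF p N sn])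
    show "typv N n \<in> simplexM0" using qM0 by (simp add: q_def)
    show "rhoP p (typv N n) = ereal (\<Sum>j\<in>UNIV. rr (q$j) (p$j))" by (simp only: q_def[symmetric] r)
  qed
  moreover have "- k * (e + k / real N) - k * (2 + ln (real N + 1)) / real N
      \<le> - (\<Sum>j\<in>UNIV. rr (q$j) (p$j)) - k * (2 + ln (real N + 1)) / real N" using rb by simp
  ultimately show ?thesis unfolding k_def by (meson ereal_less_eq(3) order_trans)
qed



lemma LD0:
  fixes f :: "real^'k::finite \<Rightarrow> real^'k" and F :: "real^'k \<Rightarrow> real^'k"
  assumes F_def: "\<And>x. F x = (\<chi> i. x$i * f x $ i)"
    and f_pos: "\<And>x i. x \<in> simplexM \<Longrightarrow> f x $ i > 0"
    and f_cont: "continuous_on simplexM f"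
    and F_maps: "\<And>x. x \<in> simplexM \<Longrightarrow> F x \<in> simplexM"
  shows "hyp_LD0 (mn_kernel F)"
  unfolding hyp_LD0_def
proof (intro allI impI)
  fix c :: real assume c: "c > 0"
  have "compact (f ` simplexM)" by (intro compact_continuous_image f_cont compact_M)
  then obtain B where B: "B > 0" and Bb: "\<And>y. y \<in> f ` simplexM \<Longrightarrow> norm y \<le> B"
    using compact_imp_bounded bounded_pos by metis
  have fB: "f x $ i \<le> B" if "x \<in> simplexM" for x i
    using Bb[of "f x"] that component_le_norm_cart[of "f x" i] by auto
  define k where "k = real CARD('k)"
  have k1: "k \<ge> 1" unfolding k_def using finite_UNIV_card_ge_0[where 'a='k] by simp
  define \<delta> where "\<delta> = min (1 / (2 * k * B)) (c / (4 * k * B))"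
  have \<delta>0: "\<delta> > 0" using B k1 c by (simp add: \<delta>_def)
  have \<delta>1: "\<delta> * B * k \<le> 1/2"
  proof -
    have "\<delta> \<le> 1 / (2 * k * B)" by (simp add: \<delta>_def)
    hence "\<delta> * (B * k) \<le> 1 / (2 * k * B) * (B * k)" using B k1 by (intro mult_right_mono) auto
    thus ?thesis using B k1 by (simp add: mult.assoc)
  qed
  have \<delta>2: "k * (\<delta> * B) \<le> c / 4"
  proof -
    have "\<delta> \<le> c / (4 * k * B)" by (simp add: \<delta>_def)
    hence "\<delta> * (B * k) \<le> c / (4 * k * B) * (B * k)" using B k1 by (intro mult_right_mono) auto
    thus ?thesis using B k1 by (simp add: mult_ac)
  qed
  define V0 where "V0 = (\<Union>i. {x::real^'k. x$i < \<delta>})"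
  show "\<exists>V0. open V0 \<and> simplexM0 \<subseteq> V0 \<and>
      - ereal c \<le> liminf (\<lambda>N. INF x\<in>V0 \<inter> simplexM. ereal (1 / real N) * elog (mn_kernel F N x simplexM0))"
  proof (intro exI[of _ V0] conjI)
    show "open V0" unfolding V0_def by (intro open_UN ballI open_Collect_less continuous_intros)
    show "simplexM0 \<subseteq> V0"
    proof
      fix x :: "real^'k" assume "x \<in> simplexM0"
      hence "(\<Prod>i\<in>UNIV. x$i) = 0" by (simp add: simplexM0_def)
      then obtain i where "x$i = 0" by auto
      thus "x \<in> V0" using \<delta>0 unfolding V0_def by (intro UN_I[of i]) auto
    qed
    obtain N0 :: nat where N0: "N0 \<ge> 1" and N0b: "\<And>N. N \<ge> N0 \<Longrightarrow> k / real N \<le> 1 \<and> k * k / real N < c/4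
        \<and> k * (2 + ln (real N + 1)) / real N \<le> c/4"
      using eventually_N0[of 1 "c/4" "c/4", where 'k='k] c unfolding k_def by auto
    have ev: "eventually (\<lambda>N. - ereal c \<le> (INF x\<in>V0 \<inter> simplexM. ereal (1 / real N) * elog (mn_kernel F N x simplexM0))) sequentially"
      unfolding eventually_sequentially
    proof (intro exI[of _ N0] allI impI INF_greatest)
      fix N x assume NN: "N \<ge> N0" and x: "x \<in> V0 \<inter> simplexM"
      have N: "N > 0" using NN N0 by simp
      have bds: "k * k / real N < c/4" "k * (2 + ln (real N + 1)) / real N \<le> c/4" using N0b[OF NN] by auto
      have xM: "x \<in> simplexM" using x by simp
      obtain i where xi: "x$i < \<delta>" using x by (auto simp: V0_def)
      have x0: "x$i \<ge> 0" using xM by (simp add: simplexM_def)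
      have "F x $ i = x$i * f x $ i" by (simp add: F_def)
      also have "\<dots> \<le> \<delta> * B" using xi x0 fB[OF xM, of i] f_pos[OF xM, of i]
        by (intro mult_mono) auto
      finally have pi: "F x $ i \<le> \<delta> * B" .
      have ek: "\<delta> * B * real CARD('k) < 1" using \<delta>1 unfolding k_def by simp
      have L: "ereal (- k * (\<delta> * B + k / real N) - k * (2 + ln (real N + 1)) / real N)
          \<le> ereal (1 / real N) * elog (mn_kernel F N x simplexM0)"
        unfolding kernel_eq k_def by (rule ld0_point[OF F_maps[OF xM] N pi ek])
      have "- c \<le> - k * (\<delta> * B + k / real N) - k * (2 + ln (real N + 1)) / real N"
      proof -
        have "k * (\<delta> * B + k / real N) = k * (\<delta> * B) + k * k / real N" by (simp add: distrib_left)
        thus ?thesis using \<delta>2 bds c by linarith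
      qed
      thus "- ereal c \<le> ereal (1 / real N) * elog (mn_kernel F N x simplexM0)"
        using L by (metis ereal_less_eq(3) ereal_uminus_uminus order_trans uminus_ereal.simps(1))
    qed
    show "- ereal c \<le> liminf (\<lambda>N. INF x\<in>V0 \<inter> simplexM. ereal (1 / real N) * elog (mn_kernel F N x simplexM0))"
      by (rule Liminf_bounded[OF ev])
  qed
qed



lemma LD_upper:
  fixes F :: "real^'k::finite \<Rightarrow> real^'k"
  assumes F_maps: "\<And>x. x \<in> simplexM \<Longrightarrow> F x \<in> simplexM"
    and C: "C \<subseteq> simplexM" and eta: "\<eta> > 0"
  shows "\<exists>\<epsilon>0>0. \<forall>N. N > 0 \<and> 1 / real N < \<epsilon>0 \<longrightarrow>
           (\<forall>x\<in>simplexM. ereal (1 / real N) * elog (mn_kernel F N x C)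
                     \<le> - (INF y\<in>C. rhoF F x y) + ereal \<eta>)"
proof -
  define k where "k = real CARD('k)"
  have l: "(\<lambda>N::nat. (2 + (k + 1) * ln (real N + 1)) / real N) \<longlonglongrightarrow> 0" by real_asymp
  have "eventually (\<lambda>N. (2 + (k + 1) * ln (real N + 1)) / real N < \<eta>) sequentially"
    using order_tendstoD(2)[OF l eta] .
  then obtain N1 where N1: "\<And>N. N \<ge> N1 \<Longrightarrow> (2 + (k + 1) * ln (real N + 1)) / real N < \<eta>"
    unfolding eventually_sequentially by blast
  define N0 where "N0 = max N1 1"
  show ?thesis
  proof (intro exI[of _ "1 / real N0"] conjI allI impI ballI)
    show "1 / real N0 > 0" by (simp add: N0_def)
    fix N :: nat and x :: "real^'k" assume NN: "N > 0 \<and> 1 / real N < 1 / real N0" and xM: "x \<in> simplexM"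
    have N: "N > 0" using NN by simp
    have "real N0 < real N"
    proof (rule ccontr)
      assume "\<not> real N0 < real N" hence "real N \<le> real N0" by simp
      hence "1 / real N0 \<le> 1 / real N" using N by (intro divide_left_mono) auto
      thus False using NN by simp
    qed
    hence "N \<ge> N1" by (simp add: N0_def)
    hence b: "(2 + (k + 1) * ln (real N + 1)) / real N \<le> \<eta>" using N1 by (simp add: less_imp_le)
    have "ereal (1 / real N) * elog (mn_kernel F N x C)
        \<le> - (INF y\<in>C. rhoP (F x) y) + ereal ((2 + (real CARD('k) + 1) * ln (real N + 1)) / real N)"
      unfolding kernel_eq by (rule kernel_upper[OF F_maps[OF xM] N C])
    also have "\<dots> \<le> - (INF y\<in>C. rhoP (F x) y) + ereal \<eta>"
      using b unfolding k_def by (intro add_left_mono) simp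
    finally show "ereal (1 / real N) * elog (mn_kernel F N x C) \<le> - (INF y\<in>C. rhoF F x y) + ereal \<eta>"
      by (simp add: rhoF_eq)
  qed
qed

theorem mainTheorem19:
  fixes f :: "real^'k::finite \<Rightarrow> real^'k"
    and F :: "real^'k \<Rightarrow> real^'k"
  assumes F_def: "\<And>x. F x = (\<chi> i. x$i * f x $ i)"
    and f_pos: "\<And>x i. x \<in> simplexM \<Longrightarrow> f x $ i > 0"
    and f_cont: "continuous_on simplexM f"
    and F_maps: "\<And>x. x \<in> simplexM \<Longrightarrow> F x \<in> simplexM"
  shows "hyp_LD F (rhoF F) (mn_kernel F) \<and> hyp_LD0 (mn_kernel F)"
proof
  show "hyp_LD0 (mn_kernel F)" by (rule LD0[OF assms])
  show "hyp_LD F (rhoF F) (mn_kernel F)"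
    unfolding hyp_LD_def
  proof (intro conjI allI impI ballI)
    fix x y :: "real^'k" assume x: "x \<in> simplexM" and y: "y \<in> simplexM"
    show "rhoF F x y \<ge> 0" unfolding rhoF_eq by (rule rhoP_nonneg[OF F_maps[OF x] y])
    show "rhoF F x y = 0 \<longleftrightarrow> y = F x" unfolding rhoF_eq by (rule rhoP_zero_iff[OF F_maps[OF x] y])
  next
    show "continuous_on (simplexM1 \<times> simplexM) (\<lambda>(x, y). rhoF F x y)"
      by (rule rho_cont[OF F_def f_pos f_cont])
  next
    fix \<beta> :: real assume b: "\<beta> > 0"
    have "ereal (\<beta>^2/2) \<le> Inf {rhoF F x y |x y. x \<in> simplexM \<and> y \<in> simplexM \<and> \<beta> < dmax (F x) y}"
    proof (rule Inf_greatest)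
      fix z assume "z \<in> {rhoF F x y |x y. x \<in> simplexM \<and> y \<in> simplexM \<and> \<beta> < dmax (F x) y}"
      then obtain x y where z: "z = rhoF F x y" "x \<in> simplexM" "y \<in> simplexM" "\<beta> < dmax (F x) y" by blast
      show "ereal (\<beta>^2/2) \<le> z" unfolding z(1) rhoF_eq
        by (rule rhoP_dmax[OF F_maps[OF z(2)] z(3) z(4) b])
    qed
    moreover have "(0::ereal) < ereal (\<beta>^2/2)" using b by simp
    ultimately show "0 < Inf {rhoF F x y |x y. x \<in> simplexM \<and> y \<in> simplexM \<and> \<beta> < dmax (F x) y}"
      by (rule less_le_trans[rotated])
  next
    fix K U :: "(real^'k) set" and \<eta> :: real assume "compact K \<and> K \<subseteq> simplexM1 \<and> is_open_ballM U \<and> 0 < \<eta>"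
    thus "\<exists>\<epsilon>0>0. \<forall>N. 0 < N \<and> 1 / real N < \<epsilon>0 \<longrightarrow>
           (\<forall>x\<in>K. - (INF y\<in>U. rhoF F x y) - ereal \<eta> \<le> ereal (1 / real N) * elog (mn_kernel F N x U))"
      using LD_lower[OF F_def f_pos f_cont F_maps] by blast
  next
    fix C :: "(real^'k) set" and \<eta> :: real assume "closed C \<and> C \<subseteq> simplexM \<and> 0 < \<eta>"
    thus "\<exists>\<epsilon>0>0. \<forall>N. 0 < N \<and> 1 / real N < \<epsilon>0 \<longrightarrow>
           (\<forall>x\<in>simplexM. ereal (1 / real N) * elog (mn_kernel F N x C) \<le> - (INF y\<in>C. rhoF F x y) + ereal \<eta>)"
      using LD_upper[where F=F, OF F_maps] by blast
  qed
qed


end
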